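(* For every $n\ge1$ there is a formula $\Phi_n'\in\mathrm{LTL}[\mathsf{F}]$ such that $\Phi_n'\equiv\Phi_n$ (i.e. $\mathcal{L}(\Phi_n')=\mathcal{L}(\Phi_n)$) and $\mathrm{size}(\Phi_n')<2^{n+1}(n+2)^2$.
   Context: Fix $n\ge1$ and atomic propositions $AP=\{\tilde p,\tilde q\}\cup\{p_1,\dots,p_n\}\cup\{q_1,\dots,q_n\}$ (all distinct), $\Sigma=2^{AP}$. Formulae are built from literals $p,\neg p$ ($p\in AP$) with $\land,\lor$ and temporal operators $\mathsf{F}$ ("at some $j$ with $i\le j<|\sigma|$") and $\mathsf{O}$ ("at some $j$ with $0\le j\le i$"), interpreted on finite non-empty traces $\sigma\in\Sigma^+$ at positions $0\le i<|\sigma|$; $\mathcal{L}(\phi)=\{\sigma\in\Sigma^+:\sigma,0\models\phi\}$. $\mathrm{LTL}[\mathsf{F}]$ denotes formulae using only the temporal operator $\mathsf{F}$. Size: literals 1, unary operators add 1, $\mathrm{size}(\phi_1\circ\phi_2)=\mathrm{size}(\phi_1)+\mathrm{size}(\phi_2)+1$ for $\circ\in\{\land,\lor\}$. Define $\Phi_n := \mathsf{F}\big(\tilde q\land\bigwedge_{i=1}^n\big((q_i\land\mathsf{O}(\tilde p\land p_i))\lor(\neg q_i\land\mathsf{O}(\tilde p\land\neg p_i))\big)\big)$. *)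

theory Defs
  imports Main
begin

(* Atomic propositions: PT = p~, QT = q~, P i = p_i, Q i = q_i *)
datatype ap = PT | QT | P nat | Q nat

definition AP :: "nat \<Rightarrow> ap set" where
  "AP n = {PT, QT} \<union> P ` {1..n} \<union> Q ` {1..n}"

datatype form = Pos ap | Neg ap | And form form | Or form form | Fut form | Once form

fun sat :: "ap set list \<Rightarrow> nat \<Rightarrow> form \<Rightarrow> bool" where
  "sat \<sigma> i (Pos p) = (p \<in> \<sigma> ! i)"
| "sat \<sigma> i (Neg p) = (p \<notin> \<sigma> ! i)"
| "sat \<sigma> i (And a b) = (sat \<sigma> i a \<and> sat \<sigma> i b)"
| "sat \<sigma> i (Or a b) = (sat \<sigma> i a \<or> sat \<sigma> i b)"
| "sat \<sigma> i (Fut a) = (\<exists>j. i \<le> j \<and> j < length \<sigma> \<and> sat \<sigma> j a)"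
| "sat \<sigma> i (Once a) = (\<exists>j. j \<le> i \<and> sat \<sigma> j a)"

definition lang :: "nat \<Rightarrow> form \<Rightarrow> ap set list set" where
  "lang n \<phi> = {\<sigma>. \<sigma> \<noteq> [] \<and> set \<sigma> \<subseteq> Pow (AP n) \<and> sat \<sigma> 0 \<phi>}"

fun size_f :: "form \<Rightarrow> nat" where
  "size_f (Pos p) = 1"
| "size_f (Neg p) = 1"
| "size_f (And a b) = size_f a + size_f b + 1"
| "size_f (Or a b) = size_f a + size_f b + 1"
| "size_f (Fut a) = size_f a + 1"
| "size_f (Once a) = size_f a + 1"

fun atoms :: "form \<Rightarrow> ap set" where
  "atoms (Pos p) = {p}"
| "atoms (Neg p) = {p}"
| "atoms (And a b) = atoms a \<union> atoms b"
| "atoms (Or a b) = atoms a \<union> atoms b"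
| "atoms (Fut a) = atoms a"
| "atoms (Once a) = atoms a"

fun is_LTLF :: "form \<Rightarrow> bool" where
  "is_LTLF (Pos p) = True"
| "is_LTLF (Neg p) = True"
| "is_LTLF (And a b) = (is_LTLF a \<and> is_LTLF b)"
| "is_LTLF (Or a b) = (is_LTLF a \<and> is_LTLF b)"
| "is_LTLF (Fut a) = is_LTLF a"
| "is_LTLF (Once a) = False"

fun BigAnd :: "form list \<Rightarrow> form" where
  "BigAnd [] = Pos PT"  (* unused: the lists used are non-empty *)
| "BigAnd [x] = x"
| "BigAnd (x # y # xs) = And x (BigAnd (y # xs))"

definition Phi :: "nat \<Rightarrow> form" where
  "Phi n = Fut (And (Pos QT)
     (BigAnd (map (\<lambda>i. Or (And (Pos (Q i)) (Once (And (Pos PT) (Pos (P i)))))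
                              (And (Neg (Q i)) (Once (And (Pos PT) (Neg (P i)))))) [1..<n+1])))"

end

theory Submission
  imports Defs
begin

fun BigOr :: "form list \<Rightarrow> form" where
  "BigOr [] = Pos PT"
| "BigOr [x] = x"
| "BigOr (x # y # xs) = Or x (BigOr (y # xs))"

lemma sat_BigAnd: "xs \<noteq> [] \<Longrightarrow> sat s i (BigAnd xs) = (\<forall>x\<in>set xs. sat s i x)"
  by (induction xs rule: BigAnd.induct) auto

lemma sat_BigOr: "xs \<noteq> [] \<Longrightarrow> sat s i (BigOr xs) = (\<exists>x\<in>set xs. sat s i x)"
  by (induction xs rule: BigOr.induct) auto

lemma size_BigAnd: "xs \<noteq> [] \<Longrightarrow> \<forall>x\<in>set xs. size_f x = c \<Longrightarrow> size_f (BigAnd xs) = length xs * (c+1) - 1"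
  by (induction xs rule: BigAnd.induct) auto

lemma size_BigOr: "xs \<noteq> [] \<Longrightarrow> \<forall>x\<in>set xs. size_f x = c \<Longrightarrow> size_f (BigOr xs) = length xs * (c+1) - 1"
  by (induction xs rule: BigOr.induct) auto

lemma atoms_BigAnd: "atoms (BigAnd xs) \<subseteq> {PT} \<union> \<Union>(atoms ` set xs)"
  by (induction xs rule: BigAnd.induct) auto

lemma atoms_BigOr: "atoms (BigOr xs) \<subseteq> {PT} \<union> \<Union>(atoms ` set xs)"
  by (induction xs rule: BigOr.induct) auto

lemma LTLF_BigAnd: "\<forall>x\<in>set xs. is_LTLF x \<Longrightarrow> is_LTLF (BigAnd xs)"
  by (induction xs rule: BigAnd.induct) auto

lemma LTLF_BigOr: "\<forall>x\<in>set xs. is_LTLF x \<Longrightarrow> is_LTLF (BigOr xs)"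
  by (induction xs rule: BigOr.induct) auto

definition lit :: "ap \<Rightarrow> bool \<Rightarrow> form" where
  "lit x b = (if b then Pos x else Neg x)"

lemma sat_lit[simp]: "sat s k (lit x b) = (x \<in> s ! k \<longleftrightarrow> b)"
  by (simp add: lit_def)

lemma size_lit[simp]: "size_f (lit x b) = 1" by (simp add: lit_def)
lemma atoms_lit[simp]: "atoms (lit x b) = {x}" by (simp add: lit_def)
lemma LTLF_lit[simp]: "is_LTLF (lit x b)" by (simp add: lit_def)

fun vals :: "nat \<Rightarrow> bool list list" where
  "vals 0 = [[]]"
| "vals (Suc k) = map (Cons True) (vals k) @ map (Cons False) (vals k)"

lemma set_vals: "set (vals n) = {bl. length bl = n}"
proof (induction n)
  case 0 then show ?case by auto
next
  case (Suc n)
  show ?case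
  proof (rule set_eqI, rule iffI)
    fix bl :: "bool list" assume "bl \<in> set (vals (Suc n))" then show "bl \<in> {bl. length bl = Suc n}"
      using Suc by auto
  next
    fix bl :: "bool list" assume "bl \<in> {bl. length bl = Suc n}"
    then obtain b bs where "bl = b # bs" "length bs = n" by (cases bl) auto
    then show "bl \<in> set (vals (Suc n))" using Suc by (cases b) auto
  qed
qed

lemma vals_ne[simp]: "vals n \<noteq> []"
  by (induction n) auto

lemma length_vals: "length (vals n) = 2 ^ n"
  by (induction n) auto

definition QV :: "nat \<Rightarrow> (nat \<Rightarrow> bool) \<Rightarrow> form" where
  "QV n v = And (Pos QT) (BigAnd (map (\<lambda>i. lit (Q i) (v i)) [1..<n+1]))"

definition Psi :: "nat \<Rightarrow> (nat \<Rightarrow> bool) \<Rightarrow> form" where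
  "Psi n v = BigAnd (map (\<lambda>i. Fut (And (And (Pos PT) (lit (P i) (v i))) (Fut (QV n v)))) [1..<n+1])"

definition Phi' :: "nat \<Rightarrow> form" where
  "Phi' n = BigOr (map (\<lambda>bl. Psi n (\<lambda>i. bl ! (i - 1))) (vals n))"

lemma set_upt1: "set [1..<n+1] = {1..n}" by auto
lemma upt1_ne: "n \<ge> 1 \<Longrightarrow> [1..<n+1] \<noteq> []" by simp

lemma sat_QV: "n \<ge> 1 \<Longrightarrow> sat s j (QV n v) = (QT \<in> s ! j \<and> (\<forall>i\<in>{1..n}. (Q i \<in> s ! j \<longleftrightarrow> v i)))"
  unfolding QV_def using upt1_ne[of n] by (simp add: sat_BigAnd set_upt1 atLeastLessThanSuc_atLeastAtMost del: upt_Suc)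

lemma sat_Psi: "n \<ge> 1 \<Longrightarrow> sat s 0 (Psi n v) = (\<forall>i\<in>{1..n}. \<exists>k<length s. PT \<in> s ! k \<and> (P i \<in> s ! k \<longleftrightarrow> v i) \<and>
    (\<exists>j\<ge>k. j < length s \<and> sat s j (QV n v)))"
  unfolding Psi_def using upt1_ne[of n] by (simp add: sat_BigAnd set_upt1 atLeastLessThanSuc_atLeastAtMost del: upt_Suc)

lemma sat_Phi: "n \<ge> 1 \<Longrightarrow> sat s 0 (Phi n) = (\<exists>j<length s. QT \<in> s ! j \<and> (\<forall>i\<in>{1..n}.
    (Q i \<in> s ! j \<and> (\<exists>k\<le>j. PT \<in> s ! k \<and> P i \<in> s ! k)) \<or>
    (Q i \<notin> s ! j \<and> (\<exists>k\<le>j. PT \<in> s ! k \<and> P i \<notin> s ! k))))"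
  unfolding Phi_def using upt1_ne[of n] by (simp add: sat_BigAnd set_upt1 atLeastLessThanSuc_atLeastAtMost del: upt_Suc)

lemma equiv: assumes n: "n \<ge> 1" shows "sat s 0 (Phi' n) = sat s 0 (Phi n)"
proof
  assume "sat s 0 (Phi' n)"
  then have "\<exists>x\<in>set (map (\<lambda>bl. Psi n (\<lambda>i. bl ! (i - 1))) (vals n)). sat s 0 x"
    unfolding Phi'_def by (subst (asm) sat_BigOr) auto
  then obtain bl where bl: "bl \<in> set (vals n)" and ps: "sat s 0 (Psi n (\<lambda>i. bl ! (i - 1)))"
    by auto
  define v where "v = (\<lambda>i. bl ! (i - 1))"
  have W: "\<forall>i\<in>{1..n}. \<exists>k<length s. PT \<in> s ! k \<and> (P i \<in> s ! k \<longleftrightarrow> v i) \<and>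
    (\<exists>j\<ge>k. j < length s \<and> sat s j (QV n v))"
  proof -
    have "sat s 0 (Psi n v)" using ps unfolding v_def .
    then show ?thesis by (simp only: sat_Psi[OF n])
  qed
  define J where "J = {j. j < length s \<and> sat s j (QV n v)}"
  have fin: "finite J" unfolding J_def by auto
  have "1 \<in> {1..n}" using n by simp
  from bspec[OF W this] obtain k j0 where "j0 < length s" "sat s j0 (QV n v)" by blast
  then have ne: "J \<noteq> {}" unfolding J_def by blast
  define j where "j = Max J"
  have jJ: "j \<in> J" unfolding j_def by (rule Max_in[OF fin ne])
  have jmax: "\<And>j'. j' \<in> J \<Longrightarrow> j' \<le> j" unfolding j_def by (rule Max_ge[OF fin])
  have jq: "QT \<in> s ! j \<and> (\<forall>i\<in>{1..n}. (Q i \<in> s ! j \<longleftrightarrow> v i))" "j < length s"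
    using jJ sat_QV[OF n] unfolding J_def by auto
  have "(Q i \<in> s ! j \<and> (\<exists>k\<le>j. PT \<in> s ! k \<and> P i \<in> s ! k)) \<or>
    (Q i \<notin> s ! j \<and> (\<exists>k\<le>j. PT \<in> s ! k \<and> P i \<notin> s ! k))" if i: "i \<in> {1..n}" for i
  proof -
    have "\<exists>k<length s. PT \<in> s ! k \<and> (P i \<in> s ! k \<longleftrightarrow> v i) \<and>
      (\<exists>j\<ge>k. j < length s \<and> sat s j (QV n v))" using bspec[OF W i] .
    then obtain k where k: "k < length s \<and> PT \<in> s ! k \<and> (P i \<in> s ! k \<longleftrightarrow> v i) \<and>
      (\<exists>j\<ge>k. j < length s \<and> sat s j (QV n v))" by blast
    then obtain j' where j': "j' \<ge> k \<and> j' < length s \<and> sat s j' (QV n v)" by blast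
    then have "j' \<in> J" unfolding J_def by simp
    then have "j' \<le> j" by (rule jmax)
    then have kj: "k \<le> j" using j' by simp
    have qi: "Q i \<in> s ! j \<longleftrightarrow> v i" using jq(1) i by blast
    show ?thesis
    proof (cases "v i")
      case True
      then show ?thesis using qi k kj by blast
    next
      case False
      then show ?thesis using qi k kj by blast
    qed
  qed
  then show "sat s 0 (Phi n)" unfolding sat_Phi[OF n] using jq by blast
next
  assume "sat s 0 (Phi n)"
  then obtain j where j: "j < length s" "QT \<in> s ! j" and H: "\<forall>i\<in>{1..n}.
    (Q i \<in> s ! j \<and> (\<exists>k\<le>j. PT \<in> s ! k \<and> P i \<in> s ! k)) \<or>
    (Q i \<notin> s ! j \<and> (\<exists>k\<le>j. PT \<in> s ! k \<and> P i \<notin> s ! k))"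
    unfolding sat_Phi[OF n] by blast
  define bl where "bl = map (\<lambda>i. Q (i+1) \<in> s ! j) [0..<n]"
  have bl: "bl \<in> set (vals n)" unfolding set_vals bl_def by simp
  define v where "v = (\<lambda>i. bl ! (i - 1))"
  have v: "\<forall>i\<in>{1..n}. v i = (Q i \<in> s ! j)" unfolding v_def bl_def by auto
  have qv: "sat s j (QV n v)" using sat_QV[OF n] j v by auto
  have "sat s 0 (Psi n v)" unfolding sat_Psi[OF n]
  proof
    fix i assume i: "i \<in> {1..n}"
    have vi: "v i = (Q i \<in> s ! j)" using v i by blast
    have Hi: "(Q i \<in> s ! j \<and> (\<exists>k\<le>j. PT \<in> s ! k \<and> P i \<in> s ! k)) \<or>
    (Q i \<notin> s ! j \<and> (\<exists>k\<le>j. PT \<in> s ! k \<and> P i \<notin> s ! k))" using H i by blast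
    have "\<exists>k\<le>j. PT \<in> s ! k \<and> (P i \<in> s ! k \<longleftrightarrow> v i)"
    proof (cases "Q i \<in> s ! j")
      case True then show ?thesis using Hi vi by auto
    next
      case False then show ?thesis using Hi vi by auto
    qed
    then obtain k where k: "k \<le> j \<and> PT \<in> s ! k \<and> (P i \<in> s ! k \<longleftrightarrow> v i)" by blast
    have "k < length s" using k j(1) by simp
    moreover have "\<exists>j'\<ge>k. j' < length s \<and> sat s j' (QV n v)" using k j(1) qv by blast
    ultimately show "\<exists>k<length s. PT \<in> s ! k \<and> (P i \<in> s ! k \<longleftrightarrow> v i) \<and>
    (\<exists>j\<ge>k. j < length s \<and> sat s j (QV n v))" using k by blast
  qed
  then have "\<exists>x\<in>set (map (\<lambda>bl. Psi n (\<lambda>i. bl ! (i - 1))) (vals n)). sat s 0 x"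
    using bl unfolding v_def by auto
  then show "sat s 0 (Phi' n)" unfolding Phi'_def by (subst sat_BigOr) auto
qed

lemma size_QV: assumes n: "n \<ge> 1" shows "size_f (QV n v) = 2 * n + 1"
proof -
  have "size_f (BigAnd (map (\<lambda>i. lit (Q i) (v i)) [1..<n+1])) = n * 2 - 1"
    using size_BigAnd[of "map (\<lambda>i. lit (Q i) (v i)) [1..<n+1]" 1] upt1_ne[OF n]
    by (simp del: upt_Suc)
  then show ?thesis unfolding QV_def using n by simp
qed

lemma size_Psi: "n \<ge> 1 \<Longrightarrow> size_f (Psi n v) = n * (2 * n + 8) - 1"
  unfolding Psi_def by (subst size_BigAnd[where c="2*n+7"]) (auto simp: size_QV algebra_simps)

lemma size_Phi': "n \<ge> 1 \<Longrightarrow> size_f (Phi' n) = 2 ^ n * (n * (2 * n + 8)) - 1"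
  unfolding Phi'_def
  apply (subst size_BigOr[where c="n * (2 * n + 8) - 1"])
  using length_vals[of n] by (auto simp: size_Psi)

theorem lemma1:
  fixes n :: nat
  assumes "n \<ge> 1"
  shows "\<exists>\<phi>. is_LTLF \<phi> \<and> atoms \<phi> \<subseteq> AP n \<and> lang n \<phi> = lang n (Phi n)
            \<and> size_f \<phi> < 2 ^ (n + 1) * (n + 2) ^ 2"
proof (intro exI conjI)
  show "is_LTLF (Phi' n)" unfolding Phi'_def Psi_def QV_def
    by (auto intro!: LTLF_BigOr LTLF_BigAnd)
  have pt: "PT \<in> AP n" "QT \<in> AP n" by (auto simp: AP_def)
  have a1: "atoms (QV n v) \<subseteq> AP n" for v
  proof -
    have "\<Union>(atoms ` set (map (\<lambda>i. lit (Q i) (v i)) [1..<n+1])) \<subseteq> AP n"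
      by (auto simp: AP_def)
    then show ?thesis unfolding QV_def
      using atoms_BigAnd[of "map (\<lambda>i. lit (Q i) (v i)) [1..<n+1]"] pt by (simp only: atoms.simps) blast
  qed
  have a2: "atoms (Psi n v) \<subseteq> AP n" for v
  proof -
    have "\<Union>(atoms ` set (map (\<lambda>i. Fut (And (And (Pos PT) (lit (P i) (v i))) (Fut (QV n v)))) [1..<n+1])) \<subseteq> AP n"
      using a1[of v] pt by (auto simp: AP_def)
    then show ?thesis unfolding Psi_def
      using atoms_BigAnd[of "map (\<lambda>i. Fut (And (And (Pos PT) (lit (P i) (v i))) (Fut (QV n v)))) [1..<n+1]"] pt by blast
  qed
  have "\<Union>(atoms ` set (map (\<lambda>bl. Psi n (\<lambda>i. bl ! (i - 1))) (vals n))) \<subseteq> AP n"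
    using a2 by auto
  then show "atoms (Phi' n) \<subseteq> AP n"
    unfolding Phi'_def using atoms_BigOr[of "map (\<lambda>bl. Psi n (\<lambda>i. bl ! (i - 1))) (vals n)"] pt by blast
  show "lang n (Phi' n) = lang n (Phi n)" unfolding lang_def using equiv[OF assms] by simp
  have "size_f (Phi' n) < 2 ^ n * (n * (2 * n + 8))" using size_Phi'[OF assms] assms by simp
  also have "\<dots> \<le> 2 ^ n * (2 * (n + 2) ^ 2)" by (simp add: power2_eq_square algebra_simps)
  also have "\<dots> = 2 ^ (n + 1) * (n + 2) ^ 2" by simp
  finally show "size_f (Phi' n) < 2 ^ (n + 1) * (n + 2) ^ 2" .
qed

end
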